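(* Let $T:[e,+\infty)\to[0,+\infty)$ be a non-decreasing continuous function such that $$\sigma_2^{\log}:=\limsup_{r\to+\infty}\frac{\log^+\log^+T(r)}{\log\log r}<1,$$ and let $\delta\in(0,1-\sigma_2^{\log})$. Then $$T(r\log r)=T(r)+o\!\left(\frac{T(r)}{(\log r)^{\delta}}\right)$$ as $r\to\infty$ outside a set $F\subset[e,\infty)$ satisfying $\int_{F\cap[e,+\infty)}\frac{dt}{t\log t}<+\infty$.
   Context: $\log^+A=\max\{0,\log A\}$ for $A\ge 0$. *)

theory Defs
  imports "HOL-Analysis.Analysis" "HOL-Library.Landau_Symbols"
begin

definition logplus :: "real \<Rightarrow> real" where
  "logplus A = max 0 (ln A)"

end

theory Submission
  imports Defs
begin


fun Lseq :: "nat \<Rightarrow> real" where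
  "Lseq 0 = 2" | "Lseq (Suc j) = Lseq j + ln (Lseq j)"

lemma Lseq_lower: "Lseq j \<ge> 2 + real j * ln 2"
proof (induction j)
  case 0 then show ?case by simp
next
  case (Suc j)
  have "ln 2 \<le> ln (Lseq j)" using Suc by (smt (verit) ln_le_cancel_iff ln_gt_zero of_nat_0_le_iff mult_nonneg_nonneg ln_ge_zero)
  then show ?case using Suc by (simp add: algebra_simps)
qed

lemma Lseq_ge2: "Lseq j \<ge> 2"
  using Lseq_lower[of j] by (smt (verit) ln_ge_zero mult_nonneg_nonneg of_nat_0_le_iff)

lemma Lseq_Suc_gt: "Lseq j < Lseq (Suc j)"
  using Lseq_ge2[of j] by simp

lemma Lseq_Suc_le: "Lseq (Suc j) \<le> 2 * Lseq j"
proof -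
  have "ln (Lseq j) < Lseq j" by (rule ln_less_self) (use Lseq_ge2[of j] in simp)
  then show ?thesis by simp
qed

lemma Lseq_strict_mono: "strict_mono Lseq"
  by (rule strict_monoI_Suc) (rule Lseq_Suc_gt)

lemma Lseq_mono: "i \<le> k \<Longrightarrow> Lseq i \<le> Lseq k"
  using Lseq_strict_mono by (simp add: strict_mono_less_eq)

lemma Lseq_unbounded: "\<exists>j. Lseq j \<ge> x"
proof -
  obtain n :: nat where "real n \<ge> x / ln 2" using real_arch_simple by blast
  then have "real n * ln 2 \<ge> x" by (simp add: field_simps)
  then show ?thesis using Lseq_lower[of n] by (intro exI[of _ n]) simp
qed

lemma Lseq_cell: assumes "x \<ge> 2" shows "\<exists>j. Lseq j \<le> x \<and> x < Lseq (Suc j)"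
proof -
  obtain k where k0: "Lseq k \<ge> x + 1" using Lseq_unbounded[of "x+1"] by blast
  then have k: "Lseq k > x" by simp
  define m where "m = (LEAST k. Lseq k > x)"
  have m: "Lseq m > x" unfolding m_def by (rule LeastI[of _ k]) (rule k)
  have "m \<noteq> 0"
  proof
    assume "m = 0" with m assms show False by simp
  qed
  then obtain j where j: "m = Suc j" by (cases m) auto
  have "\<not> Lseq j > x" using j not_less_Least[of j "\<lambda>k. Lseq k > x"] unfolding m_def by auto
  then show ?thesis using m j by (intro exI[of _ j]) auto
qed

lemma powr_neg_diff:
  fixes x y p :: real
  assumes "1 \<le> x" "x \<le> y" "0 < p"
  shows "x powr (-p) - y powr (-p) \<ge> p * y powr (-p-1) * (y - x)"
proof -
  define t where "t = x / y"
  have y0: "y > 0" using assms by simp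
  have t0: "t > 0" using assms by (simp add: t_def)
  have xt: "x = t * y" using y0 by (simp add: t_def)
  have "t powr (-p) = exp (-p * ln t)" using t0 by (simp add: powr_def)
  also have "\<dots> \<ge> 1 - p * ln t" using exp_ge_add_one_self[of "-p * ln t"] by simp
  finally have "t powr (-p) \<ge> 1 - p * ln t" .
  moreover have "ln t \<le> t - 1" using ln_le_minus_one[OF t0] .
  then have "p * ln t \<le> p * (t - 1)" using assms(3) by (intro mult_left_mono) auto
  ultimately have h: "t powr (-p) \<ge> 1 + p * (1 - t)" by (simp add: algebra_simps)
  have "x powr (-p) = t powr (-p) * y powr (-p)" using xt t0 y0 by (simp add: powr_mult)
  also have "\<dots> \<ge> (1 + p * (1 - t)) * y powr (-p)" using h by (simp add: mult_right_mono)
  finally have "x powr (-p) - y powr (-p) \<ge> p * (1 - t) * y powr (-p)" by (simp add: algebra_simps)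
  moreover have "p * (1 - t) * y powr (-p) = p * y powr (-p-1) * (y - x)"
  proof -
    have "y powr (-p-1) = y powr (-p) / y" using y0 by (simp add: powr_diff)
    then show ?thesis using y0 xt by (simp add: field_simps)
  qed
  ultimately show ?thesis by simp
qed

lemma telescope2: "(\<Sum>j<N. g (Suc (Suc j)) - g j) = g N + g (Suc N) - g 0 - (g 1 :: real)"
  by (induction N) auto

lemma ln_one_plus_lower: "0 \<le> (x::real) \<Longrightarrow> x \<le> 1 \<Longrightarrow> ln (1 + x) \<ge> x / 2"
proof -
  assume a: "0 \<le> x" "x \<le> 1"
  have "ln (1 / (1+x)) \<le> 1/(1+x) - 1" by (rule ln_le_minus_one) (use a in simp)
  then have "ln (1+x) \<ge> 1 - 1/(1+x)" using a by (simp add: ln_div)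
  moreover have "1 - 1/(1+x) = x/(1+x)" using a by (simp add: field_simps)
  moreover have "x/(1+x) \<ge> x/2" using a by (intro divide_left_mono) auto
  ultimately show ?thesis by linarith
qed



lemma key_ineq:
  fixes L Vj V2 \<sigma> p dd :: real
  assumes L: "L \<ge> 2" and V: "1 \<le> Vj" "Vj \<le> V2" "V2 \<le> 8 * L powr \<sigma>" "V2 - Vj \<ge> L powr (-dd) / 2"
    and p: "p > 0" and a: "\<sigma>*(p+1) + dd < 1" and \<sigma>: "\<sigma> \<ge> 0"
  shows "ln (L + ln L) - ln L \<le> 1 / ((1 - (\<sigma>*(p+1)+dd)) * (p/2 * 8 powr (-p-1))) * (Vj powr (-p) - V2 powr (-p))"
proof -
  define a where "a = \<sigma>*(p+1)+dd"
  define c1 where "c1 = p/2 * 8 powr (-p-1)"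
  have a1: "1 - a > 0" using a by (simp add: a_def)
  have c1: "c1 > 0" using p by (simp add: c1_def)
  have L0: "L > 0" using L by simp
  have lnL: "ln L > 0" using L by simp
  have "Vj powr (-p) - V2 powr (-p) \<ge> p * V2 powr (-p-1) * (V2 - Vj)"
    by (rule powr_neg_diff) (use V p in auto)
  moreover have "V2 powr (-p-1) \<ge> (8 * L powr \<sigma>) powr (-p-1)"
    by (rule powr_mono2') (use V p L0 in auto)
  moreover have "(8 * L powr \<sigma>) powr (-p-1) = 8 powr (-p-1) * L powr (\<sigma> * (-p-1))"
    by (simp add: powr_mult powr_powr)
  ultimately have "Vj powr (-p) - V2 powr (-p) \<ge> p * (8 powr (-p-1) * L powr (\<sigma> * (-p-1))) * (L powr (-dd) / 2)"
  proof -
    assume h1: "Vj powr (-p) - V2 powr (-p) \<ge> p * V2 powr (-p-1) * (V2 - Vj)"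
      and h2: "V2 powr (-p-1) \<ge> (8 * L powr \<sigma>) powr (-p-1)"
      and h3: "(8 * L powr \<sigma>) powr (-p-1) = 8 powr (-p-1) * L powr (\<sigma> * (-p-1))"
    have "p * (8 powr (-p-1) * L powr (\<sigma> * (-p-1))) * (L powr (-dd) / 2)
        \<le> p * V2 powr (-p-1) * (V2 - Vj)"
      using h2 h3 V(4) p by (intro mult_mono mult_left_mono) auto
    then show ?thesis using h1 by linarith
  qed
  moreover have "p * (8 powr (-p-1) * L powr (\<sigma> * (-p-1))) * (L powr (-dd) / 2) = c1 * L powr (-a)"
  proof -
    have "L powr (\<sigma> * (-p-1)) * L powr (-dd) = L powr (-a)"
    proof -
      have "\<sigma> * (-p-1) + (-dd) = -a" by (simp add: a_def algebra_simps)
      then show ?thesis by (metis powr_add)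
    qed
    then show ?thesis by (simp add: c1_def algebra_simps)
  qed
  ultimately have G: "Vj powr (-p) - V2 powr (-p) \<ge> c1 * L powr (-a)" by simp
  have "ln (L + ln L) - ln L = ln ((L + ln L) / L)" proof -
    have "L + ln L > 0" using L0 lnL by linarith
    then show ?thesis using L0 by (simp add: ln_div)
  qed
  also have "\<dots> \<le> (L + ln L) / L - 1" by (rule ln_le_minus_one) (use L0 lnL in \<open>simp add: add_pos_pos\<close>)
  also have "\<dots> = ln L / L" using L0 by (simp add: field_simps)
  also have "\<dots> \<le> (L powr (1 - a) / (1 - a)) / L"
    using ln_powr_bound[of L "1-a"] L a1 by (intro divide_right_mono) auto
  also have "\<dots> = L powr (-a) / (1 - a)"
  proof -
    have "L powr (1 - a) = L * L powr (-a)" using L0 powr_add[of L 1 "-a"] by simp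
    then show ?thesis using L0 by simp
  qed
  also have "\<dots> = 1 / ((1 - a) * c1) * (c1 * L powr (-a))" using c1 a1 by (simp add: field_simps)
  also have "\<dots> \<le> 1 / ((1 - a) * c1) * (Vj powr (-p) - V2 powr (-p))"
    using G c1 a1 by (intro mult_left_mono) auto
  finally show ?thesis by (simp add: a_def c1_def)
qed

lemma cell_integral:
  assumes "1 < a" "a \<le> b"
  shows "(\<integral>\<^sup>+x. ennreal (1/(x*ln x)) * indicator {a..b} x \<partial>lborel) = ennreal (ln (ln b) - ln (ln a))"
proof (rule nn_integral_FTC_Icc)
  show "(\<lambda>x::real. 1/(x*ln x)) \<in> borel_measurable borel" by measurable
  fix x assume x: "x \<in> {a..b}"
  then have x1: "x > 1" using assms by auto
  show "((\<lambda>x. ln (ln x)) has_real_derivative 1/(x*ln x)) (at x)"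
    using x1 by (auto intro!: derivative_eq_intros simp: field_simps)
  show "0 \<le> 1/(x*ln x)" using x1 by simp
qed (use assms in auto)



lemma order_bound:
  fixes T :: "real \<Rightarrow> real" and \<sigma> :: real
  assumes "Limsup at_top (\<lambda>r. ereal (logplus (logplus (T r)) / ln (ln r))) < ereal \<sigma>"
  shows "\<exists>r1. \<forall>r\<ge>r1. T r > 0 \<longrightarrow> ln (T r) \<le> ln r powr \<sigma>"
proof -
  have "eventually (\<lambda>r. ereal (logplus (logplus (T r)) / ln (ln r)) < ereal \<sigma>) at_top"
    using Limsup_lessD[OF assms] .
  moreover have "eventually (\<lambda>r::real. r \<ge> exp 2) at_top" by (rule eventually_ge_at_top)
  ultimately have "eventually (\<lambda>r. T r > 0 \<longrightarrow> ln (T r) \<le> ln r powr \<sigma>) at_top"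
  proof eventually_elim
    case (elim r)
    show ?case
    proof
      assume T0: "T r > 0"
      have lr: "ln r \<ge> 2" using elim(2)
        by (metis exp_gt_zero exp_le_cancel_iff exp_ln less_le_trans zero_less_numeral exp_gt_zero order.strict_trans2)
      then have llr: "ln (ln r) > 0" by simp
      define u where "u = logplus (T r)"
      have u0: "u \<ge> 0" by (simp add: u_def logplus_def)
      have "ln (T r) \<le> u" by (simp add: u_def logplus_def)
      also have "u \<le> exp (logplus u)"
      proof (cases "u > 0")
        case True
        then have "u = exp (ln u)" by simp
        also have "\<dots> \<le> exp (logplus u)" by (simp add: logplus_def)
        finally show ?thesis .
      next
        case False then have "u = 0" using u0 by simp
        then show ?thesis by simp
      qed
      also have "logplus u < \<sigma> * ln (ln r)" using elim(1) llr by (simp add: u_def field_simps)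
      then have "exp (logplus u) \<le> exp (\<sigma> * ln (ln r))" by simp
      also have "exp (\<sigma> * ln (ln r)) = ln r powr \<sigma>" using lr by (simp add: powr_def)
      finally show "ln (T r) \<le> ln r powr \<sigma>" .
    qed
  qed
  then show ?thesis by (simp add: eventually_at_top_linorder)
qed



declare Lseq.simps(2)[simp del]

theorem lemma3p1:
  fixes T :: "real \<Rightarrow> real" and \<delta> :: real
  assumes mono: "mono_on {exp 1..} T"
    and cont: "continuous_on {exp 1..} T"
    and nonneg: "\<And>r. r \<ge> exp 1 \<Longrightarrow> T r \<ge> 0"
    and order: "Limsup at_top (\<lambda>r. ereal (logplus (logplus (T r)) / ln (ln r))) < 1"
    and delta_pos: "0 < \<delta>"
    and delta_lt: "ereal \<delta> < 1 - Limsup at_top (\<lambda>r. ereal (logplus (logplus (T r)) / ln (ln r)))"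
  shows "\<exists>F. F \<subseteq> {exp 1..} \<and> F \<in> sets borel \<and>
           (\<integral>\<^sup>+ t. indicator F t * ennreal (1 / (t * ln t)) \<partial>lborel) < \<infinity> \<and>
           (\<lambda>r. T (r * ln r) - T r) \<in> smallo (inf at_top (principal (- F))) (\<lambda>r. T r / (ln r) powr \<delta>)"
proof (cases "\<forall>r\<ge>exp 1. T r = 0")
  case True
  show ?thesis
  proof (intro exI[of _ "{}"] conjI)
    show "(\<lambda>r. T (r * ln r) - T r) \<in> o[inf at_top (principal (- {}))](\<lambda>r. T r / ln r powr \<delta>)"
    proof (rule landau_o.smallI)
      fix c :: real assume "c > 0"
      have "eventually (\<lambda>r::real. r \<ge> exp 1) at_top" by (rule eventually_ge_at_top)
      then have "eventually (\<lambda>r. norm (T (r * ln r) - T r) \<le> c * norm (T r / ln r powr \<delta>)) at_top"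
      proof (elim eventually_mono)
        fix r :: real assume r: "exp 1 \<le> r"
        have "ln r \<ge> 1" using r ln_le_cancel_iff[of "exp 1" r] by (simp add: less_le_trans[OF exp_gt_zero r])
        then have "r * ln r \<ge> r" using r mult_left_mono[of 1 "ln r" r] exp_ge_zero[of 1] by simp
        then have "T (r * ln r) = 0" "T r = 0" using True r by auto
        then show "norm (T (r * ln r) - T r) \<le> c * norm (T r / ln r powr \<delta>)" by simp
      qed
      then show "eventually (\<lambda>r. norm (T (r * ln r) - T r) \<le> c * norm (T r / ln r powr \<delta>)) (inf at_top (principal (- {})))"
        by simp
    qed
  qed auto
next
  case False
  then obtain r0 where r0: "r0 \<ge> exp 1" "T r0 > 0" using nonneg by (metis less_eq_real_def)
  define S where "S = Limsup at_top (\<lambda>r. ereal (logplus (logplus (T r)) / ln (ln r)))"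
  have "S < ereal (1 - \<delta>)" using delta_lt order unfolding S_def[symmetric]
    by (cases S) (auto simp: one_ereal_def)
  then obtain s where s0: "S < ereal s" "ereal s < ereal (1 - \<delta>)" using ereal_dense2 by blast
  then have s: "S < ereal s" "s < 1 - \<delta>" by auto
  define \<sigma> where "\<sigma> = max s ((1 - \<delta>)/2)"
  have S0: "0 \<le> S" unfolding S_def
  proof (rule le_Limsup)
    have "eventually (\<lambda>r::real. r \<ge> exp 1) at_top" by (rule eventually_ge_at_top)
    then show "\<forall>\<^sub>F x in at_top. 0 \<le> ereal (logplus (logplus (T x)) / ln (ln x))"
    proof (elim eventually_mono)
      fix r :: real assume r: "exp 1 \<le> r"
      have "ln r \<ge> 1" using r ln_le_cancel_iff[of "exp 1" r] by (simp add: less_le_trans[OF exp_gt_zero r])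
      then have "ln (ln r) \<ge> 0" by simp
      then show "0 \<le> ereal (logplus (logplus (T r)) / ln (ln r))" by (simp add: logplus_def)
    qed
  qed simp
  have "0 < ereal (1 - \<delta>)" using S0 \<open>S < ereal (1 - \<delta>)\<close> by (rule le_less_trans)
  then have \<delta>1: "\<delta> < 1" by simp
  have \<sigma>1: "S < ereal \<sigma>" using s(1) by (simp add: \<sigma>_def) (metis less_le_trans ereal_less_eq(3) max.cobounded1)
  have \<sigma>2: "\<sigma> < 1 - \<delta>" using s(2) \<delta>1 by (simp add: \<sigma>_def)
  have \<sigma>3: "0 < \<sigma>" using \<delta>1 by (simp add: \<sigma>_def less_max_iff_disj)
  have \<sigma>4: "\<sigma> < 1" using \<sigma>2 delta_pos by simp
  define gap where "gap = 1 - \<delta> - \<sigma>"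
  have gap: "gap > 0" using \<sigma>2 by (simp add: gap_def)
  define dd where "dd = \<delta> + gap/3"
  define p where "p = gap / (3*(\<sigma>+1))"
  have p: "p > 0" using gap \<sigma>3 by (simp add: p_def)
  have "\<sigma> * p = gap/3 * (\<sigma>/(\<sigma>+1))" using \<sigma>3 by (simp add: p_def field_simps)
  also have "\<dots> \<le> gap/3 * 1" using gap \<sigma>3 by (intro mult_left_mono) auto
  finally have sp: "\<sigma> * p \<le> gap/3" by simp
  have "\<sigma>*(p+1) + dd = \<sigma>*p + \<sigma> + \<delta> + gap/3" by (simp add: dd_def algebra_simps)
  then have a_lt: "\<sigma>*(p+1) + dd < 1" using sp gap gap_def by linarith
  have dd: "dd > \<delta>" using gap by (simp add: dd_def)
  obtain r1 where r1: "\<forall>r\<ge>r1. T r > 0 \<longrightarrow> ln (T r) \<le> ln r powr \<sigma>"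
    using order_bound[of T \<sigma>] \<sigma>1 S_def by blast
  define r1' where "r1' = max r1 1"
  define C0 where "C0 = \<bar>1 - ln (T r0)\<bar>"
  define N where "N = max 2 (C0 powr (1/\<sigma>))"
  have NC: "C0 \<le> L powr \<sigma>" if "L \<ge> N" for L
  proof -
    have "C0 = (C0 powr (1/\<sigma>)) powr \<sigma>" using \<sigma>3 by (simp add: powr_powr C0_def)
    also have "\<dots> \<le> L powr \<sigma>" using that \<sigma>3 by (intro powr_mono2) (auto simp: N_def)
    finally show ?thesis .
  qed
  obtain J where J: "Lseq J \<ge> max N (max (ln r0) (ln r1'))" using Lseq_unbounded by blast
  define R where "R j = exp (Lseq j)" for j
  have r0pos: "r0 > 0" using r0(1) by (metis exp_gt_zero less_le_trans)
  have R_mono: "R i \<le> R k" if "i \<le> k" for i k using Lseq_mono[OF that] by (simp add: R_def)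
  have RJ: "R j \<ge> r0" "R j \<ge> r1'" if "J \<le> j" for j
  proof -
    have "Lseq j \<ge> ln r0" "Lseq j \<ge> ln r1'" using J Lseq_mono[OF that] by auto
    then have "exp (ln r0) \<le> R j" "exp (ln r1') \<le> R j" by (auto simp: R_def)
    then show "R j \<ge> r0" "R j \<ge> r1'" using r0pos by (auto simp: r1'_def)
  qed
  have R_ge: "R j \<ge> exp 1" for j using Lseq_ge2[of j] by (simp add: R_def)
  have lnR: "ln (R j) = Lseq j" for j by (simp add: R_def)
  have R_Suc: "R (Suc j) = R j * ln (R j)" for j
    using Lseq_ge2[of j] by (simp add: R_def exp_add Lseq.simps(2))
  define c where "c = T r0"
  have c: "c > 0" using r0 by (simp add: c_def)
  have TR: "T (R j) \<ge> c" if "J \<le> j" for j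
    unfolding c_def using mono r0(1) R_ge RJ(1)[OF that] by (auto intro: mono_onD)
  define V where "V j = ln (T (R j) / c) + 1" for j
  have V_alt: "V j = ln (T (R j)) - ln c + 1" if "J \<le> j" for j
    using TR[OF that] c by (simp add: V_def ln_div)
  have Vge1: "1 \<le> V j" if "J \<le> j" for j
    using TR[OF that] c by (simp add: V_def)
  have Vmono: "V i \<le> V k" if "J \<le> i" "i \<le> k" for i k
  proof -
    have "T (R i) \<le> T (R k)" using mono R_ge R_mono[OF that(2)] by (auto intro: mono_onD)
    then show ?thesis using TR[OF that(1)] c by (simp add: V_def divide_right_mono)
  qed
  have Vup: "V j \<le> 2 * Lseq j powr \<sigma>" if "J \<le> j" for j
  proof -
    have "T (R j) > 0" using TR[OF that] c by simp
    moreover have "R j \<ge> r1" using RJ(2)[OF that] by (simp add: r1'_def)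
    ultimately have "ln (T (R j)) \<le> Lseq j powr \<sigma>" using r1 lnR by metis
    moreover have "C0 \<le> Lseq j powr \<sigma>" using NC J Lseq_mono[OF that] by auto
    ultimately show ?thesis using V_alt[OF that] by (simp add: C0_def c_def)
  qed
  define eps where "eps j = Lseq j powr (-dd)" for j
  define B where "B = {j. J \<le> j \<and> T (R (Suc (Suc j))) > T (R j) * (1 + eps j)}"
  define G where "G j = - (V (max j J) powr (-p))" for j
  define K where "K = 1 / ((1 - (\<sigma>*(p+1)+dd)) * (p/2 * 8 powr (-p-1)))"
  have K: "K > 0" using a_lt p by (simp add: K_def)
  define m where "m j = (if j \<in> B then ln (Lseq (Suc j)) - ln (Lseq j) else 0)" for j
  have m0: "m j \<ge> 0" for j
  proof -
    have "ln (Lseq j) \<le> ln (Lseq (Suc j))"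
      using Lseq_Suc_gt[of j] Lseq_ge2[of j] by (subst ln_le_cancel_iff) auto
    then show ?thesis by (simp add: m_def)
  qed
  have Gmono: "G j \<le> G (Suc (Suc j))" for j
  proof -
    have "V (max j J) \<le> V (max (Suc (Suc j)) J)" by (rule Vmono) auto
    then have "V (max (Suc (Suc j)) J) powr (-p) \<le> V (max j J) powr (-p)"
      using Vge1[of "max j J"] p by (intro powr_mono2') auto
    then show ?thesis by (simp add: G_def)
  qed
  have Gb: "-1 \<le> G j" "G j \<le> 0" for j
  proof -
    have "V (max j J) powr (-p) \<le> 1 powr (-p)"
      using Vge1[of "max j J"] p by (intro powr_mono2') auto
    then show "-1 \<le> G j" by (simp add: G_def)
    show "G j \<le> 0" by (simp add: G_def)
  qed
  have mkey: "m j \<le> K * (G (Suc (Suc j)) - G j)" for j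
  proof (cases "j \<in> B")
    case False
    then show ?thesis using Gmono[of j] K by (simp add: m_def)
  next
    case True
    then have jJ: "J \<le> j" and bad: "T (R (Suc (Suc j))) > T (R j) * (1 + eps j)" by (auto simp: B_def)
    define L where "L = Lseq j"
    have L2: "L \<ge> 2" using Lseq_ge2 by (simp add: L_def)
    have eps: "0 \<le> eps j" "eps j \<le> 1"
    proof -
      show "0 \<le> eps j" by (simp add: eps_def)
      have "L powr (-dd) \<le> L powr 0" using L2 dd delta_pos by (intro powr_mono) auto
      then show "eps j \<le> 1" using L2 by (simp add: eps_def L_def)
    qed
    have TRj: "T (R j) > 0" using TR[OF jJ] c by simp
    have "ln (T (R j) * (1 + eps j)) < ln (T (R (Suc (Suc j))))"
    proof -
      have "0 < T (R j) * (1 + eps j)" using TRj eps by simp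
      then show ?thesis using bad by (subst ln_less_cancel_iff) auto
    qed
    then have "ln (T (R j)) + ln (1 + eps j) < ln (T (R (Suc (Suc j))))"
      using TRj eps by (simp add: ln_mult)
    moreover have "ln (1 + eps j) \<ge> eps j / 2" using ln_one_plus_lower eps by blast
    ultimately have dV: "V (Suc (Suc j)) - V j \<ge> L powr (-dd) / 2"
      using V_alt[OF jJ] V_alt[of "Suc (Suc j)"] jJ by (simp add: eps_def L_def)
    have "Lseq (Suc (Suc j)) \<le> 4 * L"
      using Lseq_Suc_le[of j] Lseq_Suc_le[of "Suc j"] by (simp add: L_def)
    then have "Lseq (Suc (Suc j)) powr \<sigma> \<le> (4 * L) powr \<sigma>"
      using \<sigma>3 Lseq_ge2[of "Suc (Suc j)"] by (intro powr_mono2) auto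
    also have "\<dots> = 4 powr \<sigma> * L powr \<sigma>" using L2 by (simp add: powr_mult)
    also have "\<dots> \<le> 4 * L powr \<sigma>"
    proof -
      have "4 powr \<sigma> \<le> 4 powr (1::real)" using \<sigma>4 by (intro powr_mono) auto
      then show ?thesis by (intro mult_right_mono) auto
    qed
    finally have V2: "V (Suc (Suc j)) \<le> 8 * L powr \<sigma>" using Vup[of "Suc (Suc j)"] jJ by simp
    have "ln (L + ln L) - ln L \<le> K * (V j powr (-p) - V (Suc (Suc j)) powr (-p))"
      unfolding K_def
      by (rule key_ineq[OF L2 Vge1[OF jJ] Vmono[OF jJ] V2 dV p a_lt]) (use \<sigma>3 in simp_all)
    moreover have "m j = ln (L + ln L) - ln L" using True by (simp add: m_def L_def Lseq.simps(2))
    moreover have "G (Suc (Suc j)) - G j = V j powr (-p) - V (Suc (Suc j)) powr (-p)"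
      using jJ by (simp add: G_def max_def)
    ultimately show ?thesis by simp
  qed
  have summ: "summable m"
  proof (rule summableI_nonneg_bounded)
    show "0 \<le> m j" for j by (rule m0)
    fix n
    have "(\<Sum>j<n. m j) \<le> (\<Sum>j<n. K * (G (Suc (Suc j)) - G j))" by (intro sum_mono mkey)
    also have "\<dots> = K * (G n + G (Suc n) - G 0 - G 1)"
      by (simp add: sum_distrib_left[symmetric] telescope2)
    also have "\<dots> \<le> K * 2" using Gb[of n] Gb[of "Suc n"] Gb[of 0] Gb[of 1] K
      by (intro mult_left_mono) auto
    finally show "(\<Sum>j<n. m j) \<le> K * 2" .
  qed
  define A where "A j = (if j \<in> B then {R j..R (Suc j)} else {})" for j
  define F where "F = {exp 1..R J} \<union> (\<Union>j. A j)"
  have A_borel[measurable]: "A j \<in> sets borel" for j by (simp add: A_def)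
  have F_borel: "F \<in> sets borel" unfolding F_def by measurable
  define f where "f t = ennreal (1 / (t * ln t))" for t :: real
  have f_meas[measurable]: "f \<in> borel_measurable borel" unfolding f_def by measurable
  have pw: "indicator F t * f t \<le> f t * indicator {exp 1..R J} t + (\<Sum>j. f t * indicator (A j) t)" for t
  proof (cases "t \<in> F")
    case False then show ?thesis by simp
  next
    case True
    then consider "t \<in> {exp 1..R J}" | j where "t \<in> A j" by (auto simp: F_def)
    then show ?thesis
    proof cases
      case 1 then show ?thesis using True by simp
    next
      case 2
      have "f t * indicator (A j) t \<le> (\<Sum>j. f t * indicator (A j) t)"
        using ennreal_suminf_lessD[of "\<lambda>j. f t * indicator (A j) t" "f t * indicator (A j) t" j]
        by (meson less_irrefl not_le)
      then have "f t \<le> (\<Sum>j. f t * indicator (A j) t)" using 2 by simp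
      then show ?thesis using True by (simp add: add_increasing)
    qed
  qed
  have intA: "(\<integral>\<^sup>+t. f t * indicator (A j) t \<partial>lborel) = ennreal (m j)" for j
  proof (cases "j \<in> B")
    case True
    have "(\<integral>\<^sup>+t. f t * indicator (A j) t \<partial>lborel) = ennreal (ln (ln (R (Suc j))) - ln (ln (R j)))"
      unfolding f_def using True R_ge[of j] R_mono[of j "Suc j"]
      by (simp add: A_def) (rule cell_integral, auto intro: less_le_trans[OF _ R_ge[of j]])
    then show ?thesis using True by (simp add: lnR m_def)
  next
    case False
    then show ?thesis by (simp add: A_def m_def)
  qed
  have int1: "(\<integral>\<^sup>+t. f t * indicator {exp 1..R J} t \<partial>lborel) = ennreal (ln (ln (R J)) - ln (ln (exp 1)))"
    unfolding f_def by (rule cell_integral) (use R_ge in auto)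
  have "(\<integral>\<^sup>+ t. indicator F t * f t \<partial>lborel)
      \<le> (\<integral>\<^sup>+ t. f t * indicator {exp 1..R J} t + (\<Sum>j. f t * indicator (A j) t) \<partial>lborel)"
    by (intro nn_integral_mono pw)
  also have "\<dots> = (\<integral>\<^sup>+ t. f t * indicator {exp 1..R J} t \<partial>lborel) + (\<integral>\<^sup>+ t. (\<Sum>j. f t * indicator (A j) t) \<partial>lborel)"
    by (rule nn_integral_add) auto
  also have "(\<integral>\<^sup>+ t. (\<Sum>j. f t * indicator (A j) t) \<partial>lborel) = (\<Sum>j. (\<integral>\<^sup>+ t. f t * indicator (A j) t \<partial>lborel))"
    by (rule nn_integral_suminf) auto
  also have "\<dots> = (\<Sum>j. ennreal (m j))" by (simp add: intA)
  also have "\<dots> = ennreal (\<Sum>j. m j)" by (rule suminf_ennreal2[OF m0 summ])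
  finally have intF0: "(\<integral>\<^sup>+ t. indicator F t * f t \<partial>lborel) \<le> ennreal (ln (ln (R J)) - ln (ln (exp 1))) + ennreal (\<Sum>j. m j)"
    by (simp add: int1)
  have "ennreal (ln (ln (R J)) - ln (ln (exp 1))) + ennreal (\<Sum>j. m j) < \<infinity>" by simp
  with intF0 have intF: "(\<integral>\<^sup>+ t. indicator F t * f t \<partial>lborel) < \<infinity>" by (rule le_less_trans)
  show ?thesis
  proof (intro exI[of _ F] conjI)
    show "F \<subseteq> {exp 1..}" by (auto simp: F_def A_def split: if_splits intro: order_trans[OF R_ge])
    show "F \<in> sets borel" by (rule F_borel)
    show "(\<integral>\<^sup>+ t. indicator F t * ennreal (1 / (t * ln t)) \<partial>lborel) < \<infinity>" using intF by (simp add: f_def)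
    show "(\<lambda>r. T (r * ln r) - T r) \<in> o[inf at_top (principal (- F))](\<lambda>r. T r / ln r powr \<delta>)"
    proof (rule landau_o.smallI)
      fix cc :: real assume cc: "cc > 0"
      have "((\<lambda>L. L powr (\<delta> - dd)) \<longlongrightarrow> 0) at_top"
        using dd by (intro tendsto_neg_powr filterlim_ident) auto
      then have "eventually (\<lambda>L. L powr (\<delta> - dd) < cc / 2) at_top"
        using cc by (intro order_tendstoD) auto
      then obtain N2 where N2: "\<And>L. L \<ge> N2 \<Longrightarrow> L powr (\<delta> - dd) < cc / 2"
        by (auto simp: eventually_at_top_linorder)
      have "eventually (\<lambda>r. r \<ge> exp (max (2 * N2) (Lseq J + 1))) at_top" by (rule eventually_ge_at_top)
      then have "eventually (\<lambda>r. r \<in> - F \<longrightarrow> norm (T (r * ln r) - T r) \<le> cc * norm (T r / ln r powr \<delta>)) at_top"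
      proof (elim eventually_mono, intro impI)
        fix r assume r: "r \<ge> exp (max (2 * N2) (Lseq J + 1))" and rF: "r \<in> - F"
        have rpos: "r > 0" using r by (metis exp_gt_zero less_le_trans)
        have lr: "ln r \<ge> max (2 * N2) (Lseq J + 1)"
          using r rpos by (metis exp_le_cancel_iff exp_ln)
        have lr2: "ln r \<ge> 2" using lr Lseq_ge2[of J] by simp
        obtain j where j: "Lseq j \<le> ln r" "ln r < Lseq (Suc j)" using Lseq_cell[OF lr2] by blast
        have jJ: "J \<le> j"
        proof (rule ccontr)
          assume "\<not> J \<le> j"
          then have "Suc j \<le> J" by simp
          then have "Lseq (Suc j) \<le> Lseq J" by (rule Lseq_mono)
          then show False using j lr by simp
        qed
        have Rj: "R j \<le> r" "r \<le> R (Suc j)"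
          using j rpos by (auto simp: R_def) (metis exp_le_cancel_iff exp_ln less_imp_le)+
        have "j \<notin> B"
        proof
          assume "j \<in> B"
          then have "r \<in> A j" using Rj by (simp add: A_def)
          then show False using rF by (auto simp: F_def)
        qed
        then have good: "T (R (Suc (Suc j))) \<le> T (R j) * (1 + eps j)" using jJ by (auto simp: B_def)
        have re: "r \<ge> exp 1" using R_ge[of j] Rj by simp
        have lr1: "ln r \<ge> 1" using lr2 by simp
        have rl1: "r \<le> r * ln r" using lr1 rpos by (simp add: mult_le_cancel_left1)
        have "r * ln r \<le> R (Suc j) * ln (R (Suc j))"
          using Rj j lr1 rpos re exp_ge_add_one_self[of 1] by (intro mult_mono) (auto simp: lnR)
        then have rl2: "r * ln r \<le> R (Suc (Suc j))" by (simp add: R_Suc)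
        have T1: "T r \<le> T (r * ln r)" using mono re rl1 by (auto intro: mono_onD order_trans)
        have T2: "T (r * ln r) \<le> T (R (Suc (Suc j)))" using mono re rl1 rl2 by (auto intro: mono_onD order_trans)
        have T3: "T (R j) \<le> T r" using R_ge[of j] re Rj(1) by (intro mono_onD[OF mono]) auto
        have TRj: "T (R j) > 0" using TR[OF jJ] c by simp
        define L where "L = Lseq j"
        have L2: "L \<ge> 2" using Lseq_ge2 by (simp add: L_def)
        have lrL: "ln r \<le> 2 * L" using j Lseq_Suc_le[of j] by (simp add: L_def)
        have LN2: "L \<ge> N2" using lrL lr by simp
        have lrd: "ln r powr \<delta> > 0" using lr2 by simp
        have "eps j * ln r powr \<delta> \<le> L powr (-dd) * (2 * L) powr \<delta>"
        proof -
          have "ln r powr \<delta> \<le> (2 * L) powr \<delta>" using lrL lr2 delta_pos by (intro powr_mono2) auto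
          then show ?thesis by (simp add: eps_def L_def[symmetric] mult_left_mono)
        qed
        also have "\<dots> = 2 powr \<delta> * (L powr (-dd) * L powr \<delta>)" using L2 by (simp add: powr_mult)
        also have "L powr (-dd) * L powr \<delta> = L powr (\<delta> - dd)" by (simp add: powr_add[symmetric])
        also have "2 powr \<delta> \<le> 2 powr (1::real)" using \<delta>1 by (intro powr_mono) auto
        then have "2 powr \<delta> * L powr (\<delta> - dd) \<le> 2 * L powr (\<delta> - dd)" by (intro mult_right_mono) auto
        also have "\<dots> \<le> cc" using N2[OF LN2] by simp
        finally have epsb: "eps j \<le> cc / ln r powr \<delta>" using lrd by (simp add: field_simps)
        have "norm (T (r * ln r) - T r) = T (r * ln r) - T r" using T1 by simp
        also have "\<dots> \<le> T (R (Suc (Suc j))) - T (R j)" using T2 T3 by simp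
        also have "\<dots> \<le> T (R j) * eps j" using good by (simp add: algebra_simps)
        also have "\<dots> \<le> T r * eps j" using T3 by (intro mult_right_mono) (auto simp: eps_def)
        also have "\<dots> \<le> T r * (cc / ln r powr \<delta>)" using epsb T3 TRj by (intro mult_left_mono) auto
        also have "\<dots> = cc * norm (T r / ln r powr \<delta>)" using T3 TRj lrd by simp
        finally show "norm (T (r * ln r) - T r) \<le> cc * norm (T r / ln r powr \<delta>)" .
      qed
      then show "eventually (\<lambda>r. norm (T (r * ln r) - T r) \<le> cc * norm (T r / ln r powr \<delta>)) (inf at_top (principal (- F)))"
        by (simp add: eventually_inf_principal)
    qed
  qed
qed


end
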